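(* Let $N\ge2$. Equip the space of real symmetric $N\times N$ matrices with the inner product $\langle A|B\rangle=\operatorname{Tr}(AB)$ and norm $\|A\|=\sqrt{\langle A|A\rangle}$, and write $\hat A=A-\mathbb{1}_N$. (i) Every Ising matrix $\boldsymbol\gamma\in\mathcal{I}$ satisfies $\|\hat{\boldsymbol\gamma}\|=\sqrt{N(N-1)}$. (ii) For $0\le k\le\lfloor N/2\rfloor$ and every $\boldsymbol\gamma\in\mathcal{I}_k$, $\langle\hat{\boldsymbol\gamma}|\hat A_0\rangle=(N-2k)^2-N$. (iii) For every $\boldsymbol\gamma\in\mathcal{I}_k$, $\|\boldsymbol\gamma-A_0\|=2\sqrt{2k(N-k)}$. (iv) The barycenter $B_k=\frac{1}{|\mathcal{I}_k|}\sum_{\boldsymbol\gamma\in\mathcal{I}_k}\boldsymbol\gamma$ satisfies $B_k=\Bigl(1-\frac{4k(N-k)}{N(N-1)}\Bigr)A_0+\frac{4k(N-k)}{N(N-1)}\mathbb{1}_N$.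
   Context: An Ising matrix is a matrix $\mathbf{s}\mathbf{s}^\top$ with $\mathbf{s}\in\{+1,-1\}^N$ (a column vector); $\mathcal{I}$ is the set of all Ising matrices (the rank-one elements of the set of positive semi-definite symmetric $N\times N$ matrices with unit diagonal). For $\mathcal{K}\subseteq\{1,\ldots,N\}$, $A_{\mathcal K}$ denotes the Ising matrix of the vector with $s_\mu=-1$ for $\mu\in\mathcal K$ and $s_\mu=+1$ otherwise; $A_0=A_\emptyset$ is the all-ones matrix. For $0\le k\le\lfloor N/2\rfloor$, $\mathcal{I}_k=\{A_{\mathcal K}:|\mathcal K|=k\}$ (as a set of matrices). $\mathbb{1}_N$ is the identity matrix. *)

theory Defs
  imports "HOL-Analysis.Analysis"
begin

text \<open>N x N real matrices indexed by a finite type 'n, N = CARD('n).\<close>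

definition ising_mat :: "real^'n \<Rightarrow> real^'n^'n" where
  "ising_mat s = (\<chi> i j. s$i * s$j)"

definition ising_set :: "(real^'n^'n) set" where
  "ising_set = {ising_mat s | s. \<forall>i. s$i = 1 \<or> s$i = -1}"

definition A_of :: "'n set \<Rightarrow> real^'n^'n" where
  "A_of K = ising_mat (\<chi> i. if i \<in> K then -1 else 1)"

definition A0 :: "real^'n^'n" where
  "A0 = A_of {}"

definition ising_k :: "nat \<Rightarrow> (real^'n^'n) set" where
  "ising_k k = {A_of K | K::'n set. card K = k}"

definition minner :: "real^'n^'n \<Rightarrow> real^'n^'n \<Rightarrow> real" where
  "minner A B = trace (A ** B)"

definition mnorm :: "real^'n^'n \<Rightarrow> real" where
  "mnorm A = sqrt (minner A A)"

definition hat :: "real^'n^'n \<Rightarrow> real^'n^'n" where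
  "hat A = A - mat 1"

definition barycenter :: "nat \<Rightarrow> real^'n^'n" where
  "barycenter k = (1 / real (card (ising_k k :: (real^'n^'n) set))) *\<^sub>R (\<Sum>g\<in>ising_k k. g)"

end

theory Submission imports Defs begin

definition sK :: "'n set \<Rightarrow> 'n \<Rightarrow> real" where
  "sK K i = (if i \<in> K then -1 else 1)"

lemma sK_sq[simp]: "sK K i * sK K i = 1"
  by (simp add: sK_def)

lemma A_of_entry: "A_of K $ i $ j = sK K i * sK K j"
  by (simp add: A_of_def ising_mat_def sK_def)

lemma minner_expand: "minner A B = (\<Sum>i\<in>UNIV. \<Sum>j\<in>UNIV. A$i$j * B$j$i)"
  by (simp add: minner_def trace_def matrix_matrix_mult_def)

lemma sum_sK: "(\<Sum>i\<in>(UNIV::'n::finite set). sK K i) = real CARD('n) - 2 * real (card K)"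
proof -
  have "(\<Sum>i\<in>(UNIV::'n set). sK K i) = (\<Sum>i\<in>UNIV. 1 - 2 * (if i \<in> K then 1 else 0))"
    by (rule sum.cong) (auto simp: sK_def)
  also have "\<dots> = real CARD('n) - 2 * real (card K)"
    by (simp add: sum_subtractf sum_distrib_left[symmetric] sum.If_cases)
  finally show ?thesis .
qed

lemma sum_sq_sK: "(\<Sum>i\<in>(UNIV::'n::finite set). \<Sum>j\<in>UNIV. sK K i * sK K j) = (real CARD('n) - 2 * real (card K))^2"
  by (simp add: sum_product[symmetric] sum_sK power2_eq_square)

lemma sum_sq_sK2: "(\<Sum>i\<in>(UNIV::'n::finite set). sK K i * sum (sK K) UNIV) = (real CARD('n) - 2 * real (card K))^2"
  by (simp add: sum_distrib_right[symmetric] sum_sK power2_eq_square)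

lemma sum_offdiag: "(\<Sum>j\<in>(UNIV::'n::finite set). (if i = j then 0 else 1::real)) = real CARD('n) - 1"
proof -
  have "(\<Sum>j\<in>(UNIV::'n set). (if i = j then 0 else 1::real)) = (\<Sum>j\<in>UNIV. 1 - (if i = j then 1 else 0))"
    by (rule sum.cong) auto
  also have "\<dots> = real CARD('n) - 1" by (simp add: sum_subtractf)
  finally show ?thesis .
qed

lemma part1:
  assumes "g \<in> (ising_set :: (real^'n::finite^'n) set)"
  shows "mnorm (hat g) = sqrt (real (CARD('n)) * (real (CARD('n)) - 1))"
proof -
  obtain s where g: "g = ising_mat s" and s: "\<forall>i. s$i = 1 \<or> s$i = -1"
    using assms by (auto simp: ising_set_def)
  have ss: "s$i * s$i = 1" for i using s[rule_format, of i] by auto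
  have e: "hat g $ i $ j * hat g $ j $ i = (if i = j then 0 else 1)" for i j
  proof -
    have "hat g $ i $ j * hat g $ j $ i = (s $ i * s $ j - (if i = j then 1 else 0))^2"
      by (simp add: hat_def g ising_mat_def mat_def power2_eq_square mult.commute)
    also have "\<dots> = (if i = j then 0 else 1)"
      using ss[of i] ss[of j] by (auto simp: power2_eq_square algebra_simps)
    finally show ?thesis .
  qed
  show ?thesis
    by (simp add: mnorm_def minner_expand e sum_offdiag)
qed

lemma part2:
  assumes "g \<in> (ising_k k :: (real^'n::finite^'n) set)"
  shows "minner (hat g) (hat A0) = (real (CARD('n)) - 2 * real k)^2 - real (CARD('n))"
proof -
  obtain K where g: "g = A_of K" and K: "card K = k"
    using assms by (auto simp: ising_k_def)
  have e: "hat g $ i $ j * hat A0 $ j $ i = sK K i * sK K j - (if i = j then 1 else 0)" for i j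
    by (auto simp: hat_def g A0_def A_of_entry mat_def sK_def)
  show ?thesis
    by (simp only: minner_expand e sum_subtractf sum_sq_sK) (simp add: K)
qed

lemma part3:
  assumes "g \<in> (ising_k k :: (real^'n::finite^'n) set)"
  shows "mnorm (g - A0) = 2 * sqrt (2 * real k * (real (CARD('n)) - real k))"
proof -
  obtain K where g: "g = A_of K" and K: "card K = k"
    using assms by (auto simp: ising_k_def)
  have e: "(g - A0) $ i $ j * (g - A0) $ j $ i = 2 - 2 * (sK K i * sK K j)" for i j
    by (auto simp: g A0_def A_of_entry sK_def)
  have "minner (g - A0) (g - A0) = (\<Sum>i\<in>UNIV. \<Sum>j\<in>UNIV. 2 - 2 * (sK K i * sK K j))"
    unfolding minner_expand e ..
  also have "\<dots> = 2 * real CARD('n) * real CARD('n) - 2 * (real CARD('n) - 2 * real k)^2"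
    by (simp only: sum_subtractf sum_distrib_left[symmetric] sum_sq_sK2) (simp add: K)
  also have "\<dots> = 4 * (2 * real k * (real (CARD('n)) - real k))"
    by (simp add: power2_eq_square algebra_simps)
  finally have "minner (g - A0) (g - A0) = 4 * (2 * real k * (real (CARD('n)) - real k))" .
  moreover have "sqrt (4 * x) = 2 * sqrt x" for x :: real
    by (simp add: real_sqrt_mult)
  ultimately show ?thesis
    by (simp only: mnorm_def)
qed

lemma sK_mem: "i \<in> K \<longleftrightarrow> sK K i = -1"
  by (simp add: sK_def)

lemma sK_compl: "sK (- K) i = - sK K i"
  by (simp add: sK_def)

lemma sK_ne0: "sK K i \<noteq> 0"
  by (simp add: sK_def)

lemma A_of_eq: "A_of L = (A_of K :: real^'n^'n) \<longleftrightarrow> L = K \<or> L = - K"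
proof
  assume "L = K \<or> L = - K"
  then show "A_of L = (A_of K :: real^'n^'n)"
    by (auto simp: vec_eq_iff A_of_entry sK_compl)
next
  assume eq: "A_of L = (A_of K :: real^'n^'n)"
  obtain i0 :: 'n where True by blast
  have e: "sK L i * sK L i0 = sK K i * sK K i0" for i
    using arg_cong[OF eq, of "\<lambda>A. A $ i $ i0"] by (simp add: A_of_entry)
  show "L = K \<or> L = - K"
  proof (cases "sK L i0 = sK K i0")
    case True
    then have "sK L i = sK K i" for i using e[of i] sK_ne0[of K i0] by simp
    then have "L = K" by (auto simp: sK_mem)
    then show ?thesis ..
  next
    case False
    then have f: "sK L i0 = - sK K i0" by (auto simp: sK_def split: if_splits)
    have "sK L i = sK (- K) i" for i using e[of i] f by (auto simp: sK_compl sK_def split: if_splits)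
    then have "L = - K" by (metis sK_mem subsetI subset_antisym)
    then show ?thesis ..
  qed
qed

definition swp :: "'a \<Rightarrow> 'a \<Rightarrow> 'a \<Rightarrow> 'a" where
  "swp a b x = (if x = a then b else if x = b then a else x)"

lemma swp_inv[simp]: "swp a b (swp a b x) = x"
  by (simp add: swp_def)

lemma swp_inj: "inj (swp a b)"
  by (metis injI swp_inv)

lemma sum_perm_inv:
  fixes f :: "'n::finite set \<Rightarrow> real"
  shows "(\<Sum>K\<in>{K. card K = k}. f ((`) (swp a b) K)) = (\<Sum>K\<in>{K. card K = k}. f K)"
proof (rule sum.reindex_bij_betw)
  have ii: "swp a b ` swp a b ` K = K" for K :: "'n set"
    by (simp add: image_comp comp_def)
  have cc: "card (swp a b ` K) = card K" for K :: "'n set"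
    by (rule card_image) (rule inj_on_subset[OF swp_inj], simp)
  show "bij_betw ((`) (swp a b)) {K :: 'n set. card K = k} {K. card K = k}"
    by (rule bij_betw_byWitness[where f'="(`) (swp a b)"]) (auto simp: ii cc)
qed

lemma sK_swp: "sK (swp a b ` K) (swp a b i) = sK K i"
  using swp_inj[of a b] by (simp add: sK_def inj_image_mem_iff)

definition cc :: "nat \<Rightarrow> 'n::finite \<Rightarrow> 'n \<Rightarrow> real" where
  "cc k i j = (\<Sum>K\<in>{K::'n set. card K = k}. sK K i * sK K j)"

lemma cc_swp:
  fixes a b i j :: "'n::finite"
  shows "cc k (swp a b i) (swp a b j) = cc k i j"
proof -
  have "cc k (swp a b i) (swp a b j) =
     (\<Sum>K\<in>{K::'n set. card K = k}. sK (swp a b ` K) (swp a b i) * sK (swp a b ` K) (swp a b j))"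
    unfolding cc_def by (rule sum_perm_inv[symmetric])
  then show ?thesis by (simp add: sK_swp cc_def)
qed

lemma cc_offdiag:
  fixes i j i' j' :: "'n::finite"
  assumes "i \<noteq> j" "i' \<noteq> j'"
  shows "cc k i j = cc k i' j'"
proof -
  define j1 where "j1 = swp i i' j"
  have i1: "swp i i' i = i'" by (simp add: swp_def)
  have "j1 \<noteq> i'" using assms swp_inj[of i i'] unfolding j1_def
    by (metis i1 injD)
  then have a: "swp j1 j' i' = i'" using assms by (simp add: swp_def)
  have b: "swp j1 j' j1 = j'" by (simp add: swp_def)
  have "cc k i j = cc k i' j1" using cc_swp[of k i i' i j] by (simp add: i1 j1_def)
  also have "\<dots> = cc k i' j'" using cc_swp[of k j1 j' i' j1] by (simp add: a b)
  finally show ?thesis .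
qed

lemma cc_diag: "cc k (i::'n::finite) i = real (card {K::'n::finite set. card K = k})"
  by (simp add: cc_def)

lemma cc_total: "(\<Sum>i\<in>(UNIV::'n::finite set). \<Sum>j\<in>UNIV. cc k i j) =
   real (card {K::'n::finite set. card K = k}) * (real CARD('n) - 2 * real k)^2"
proof -
  have "(\<Sum>i\<in>(UNIV::'n set). \<Sum>j\<in>UNIV. cc k i j)
     = (\<Sum>i\<in>(UNIV::'n set). \<Sum>j\<in>UNIV. \<Sum>K\<in>{K::'n set. card K = k}. sK K i * sK K j)"
    by (simp only: cc_def)
  also have "\<dots> = (\<Sum>i\<in>(UNIV::'n set). \<Sum>K\<in>{K::'n set. card K = k}. \<Sum>j\<in>UNIV. sK K i * sK K j)"
    by (rule sum.cong[OF refl], rule sum.swap)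
  also have "\<dots> = (\<Sum>K\<in>{K::'n set. card K = k}. \<Sum>i\<in>UNIV. \<Sum>j\<in>UNIV. sK K i * sK K j)"
    by (rule sum.swap)
  also have "\<dots> = (\<Sum>K\<in>{K::'n set. card K = k}. (real CARD('n) - 2 * real k)^2)"
    by (rule sum.cong) (simp_all only: sum_sq_sK mem_Collect_eq)
  finally show ?thesis by simp
qed

lemma cc_value:
  fixes i j :: "'n::finite"
  assumes N2: "CARD('n) \<ge> 2" and ij: "i \<noteq> j"
  shows "cc k i j = real (card {K::'n set. card K = k}) * ((real CARD('n) - 2 * real k)^2 - real CARD('n))
      / (real CARD('n) * (real CARD('n) - 1))"
proof -
  define c0 where "c0 = cc k i j"
  define s where "s = real (card {K::'n set. card K = k})"
  define N where "N = real CARD('n)"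
  have row: "(\<Sum>j'\<in>UNIV. cc k i' j') = N * c0 + (s - c0)" for i' :: 'n
  proof -
    have "(\<Sum>j'\<in>UNIV. cc k i' j') = (\<Sum>j'\<in>UNIV. c0 + (if i' = j' then s - c0 else 0))"
      by (rule sum.cong) (auto simp: c0_def s_def cc_diag intro: cc_offdiag[OF _ ij])
    also have "\<dots> = N * c0 + (s - c0)" by (simp add: sum.distrib N_def)
    finally show ?thesis .
  qed
  have eq: "N * (N * c0 + (s - c0)) = s * (N - 2 * real k)^2"
    using cc_total[of k, where 'n='n] by (simp add: row N_def s_def)
  have x1: "N * (N * c0 + (s - c0)) = c0 * (N * (N - 1)) + N * s"
    by (simp add: algebra_simps)
  have x2: "s * ((N - 2 * real k)^2 - N) = s * (N - 2 * real k)^2 - N * s"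
    by (simp add: algebra_simps)
  have h: "c0 * (N * (N - 1)) = s * ((N - 2 * real k)^2 - N)"
    using eq x1 x2 by linarith
  have "N * (N - 1) \<noteq> 0" using N2 by (simp add: N_def)
  then have "c0 = s * ((N - 2 * real k)^2 - N) / (N * (N - 1))"
    using h by (simp add: eq_divide_eq)
  then show ?thesis by (simp add: c0_def s_def N_def)
qed

lemma fiber_card:
  fixes K :: "'n::finite set"
  assumes K: "card K = k" and kN: "k \<le> CARD('n)"
  shows "real (card {L. L \<in> {L::'n set. card L = k} \<and> A_of L = (A_of K :: real^'n^'n)})
       = (if 2 * k = CARD('n) then 2 else 1)"
proof -
  have cc: "card (- K) = CARD('n) - k"
    using K by (simp add: Compl_eq_Diff_UNIV card_Diff_subset)
  have ne: "K \<noteq> - K" by auto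
  have F: "{L. L \<in> {L::'n set. card L = k} \<and> A_of L = (A_of K :: real^'n^'n)}
     = (if 2 * k = CARD('n) then {K, -K} else {K})"
  proof -
    have F0: "{L. L \<in> {L::'n set. card L = k} \<and> A_of L = (A_of K :: real^'n^'n)}
       = {L. (L = K \<or> L = - K) \<and> card L = k}"
      by (rule Collect_cong) (simp only: mem_Collect_eq A_of_eq, blast)
    show ?thesis
    proof (cases "2 * k = CARD('n)")
      case True
      then have "card (- K) = k" using cc by simp
      then have "{L. (L = K \<or> L = - K) \<and> card L = k} = {K, - K}" using K by blast
      then show ?thesis using True F0 by simp
    next
      case False
      then have "card (- K) \<noteq> k" using cc kN by simp
      then have "{L. (L = K \<or> L = - K) \<and> card L = k} = {K}" using K by blast
      then show ?thesis using False F0 by simp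
    qed
  qed
  show ?thesis unfolding F using ne by simp
qed

lemma bary_S:
  assumes kN: "k \<le> CARD('n::finite)"
  shows "(barycenter k :: real^'n^'n) =
     (1 / real (card {K::'n set. card K = k})) *\<^sub>R (\<Sum>K\<in>{K::'n set. card K = k}. (A_of K :: real^'n^'n))"
proof -
  define S where "S = {K::'n set. card K = k}"
  define m :: real where "m = (if 2 * k = CARD('n) then 2 else 1)"
  have fS: "finite S" by simp
  have I: "(ising_k k :: (real^'n^'n) set) = A_of ` S" by (auto simp: ising_k_def S_def)
  have fib: "real (card {L. L \<in> S \<and> A_of L = g}) = m" if "g \<in> (A_of ` S :: (real^'n^'n) set)" for g
    using that fiber_card[OF _ kN] by (auto simp: S_def m_def)
  have sumA: "(\<Sum>K\<in>S. (A_of K :: real^'n^'n)) = m *\<^sub>R (\<Sum>g\<in>A_of ` S. g)"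
  proof -
    have "(\<Sum>K\<in>S. (A_of K :: real^'n^'n)) = (\<Sum>g\<in>A_of ` S. \<Sum>L\<in>{L. L \<in> S \<and> A_of L = g}. A_of L)"
      by (rule sum.image_gen[OF fS])
    also have "\<dots> = (\<Sum>g\<in>A_of ` S. m *\<^sub>R g)"
    proof (rule sum.cong[OF refl])
      fix g :: "real^'n^'n" assume g: "g \<in> A_of ` S"
      have "(\<Sum>L\<in>{L. L \<in> S \<and> A_of L = g}. A_of L) = (\<Sum>L\<in>{L. L \<in> S \<and> A_of L = g}. g)"
        by (rule sum.cong) auto
      also have "\<dots> = real (card {L. L \<in> S \<and> A_of L = g}) *\<^sub>R g" by (rule sum_constant_scaleR)
      also have "\<dots> = m *\<^sub>R g" by (simp only: fib[OF g])
      finally show "(\<Sum>L\<in>{L. L \<in> S \<and> A_of L = g}. A_of L) = m *\<^sub>R g" .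
    qed
    also have "\<dots> = m *\<^sub>R (\<Sum>g\<in>A_of ` S. g)" by (simp add: scaleR_sum_right)
    finally show ?thesis .
  qed
  have cardS: "real (card S) = m * real (card (A_of ` S :: (real^'n^'n) set))"
  proof -
    have "real (card S) = (\<Sum>K\<in>S. (1::real))" by simp
    also have "\<dots> = (\<Sum>g\<in>(A_of ` S :: (real^'n^'n) set). \<Sum>L\<in>{L. L \<in> S \<and> A_of L = g}. (1::real))"
      by (rule sum.image_gen[OF fS])
    also have "\<dots> = (\<Sum>g\<in>(A_of ` S :: (real^'n^'n) set). m)"
      by (rule sum.cong[OF refl]) (simp add: fib)
    also have "\<dots> = m * real (card (A_of ` S :: (real^'n^'n) set))" by simp
    finally show ?thesis .
  qed
  have m0: "m \<noteq> 0" by (simp add: m_def)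
  show ?thesis
    unfolding barycenter_def I S_def[symmetric] sumA cardS using m0 by simp
qed

lemma part4:
  fixes k :: nat
  assumes N2: "CARD('n::finite) \<ge> 2"
    and kle: "k \<le> CARD('n) div 2"
  shows "(barycenter k :: real^'n^'n) =
            (1 - 4 * real k * (real (CARD('n)) - real k) / (real (CARD('n)) * (real (CARD('n)) - 1))) *\<^sub>R A0
            + (4 * real k * (real (CARD('n)) - real k) / (real (CARD('n)) * (real (CARD('n)) - 1))) *\<^sub>R mat 1"
proof -
  have kN: "k \<le> CARD('n)" using kle by simp
  define s where "s = real (card {K::'n set. card K = k})"
  define N where "N = real CARD('n)"
  define q where "q = 4 * real k * (N - real k) / (N * (N - 1))"
  obtain T :: "'n set" where T: "card T = k"
    using obtain_subset_with_card_n[of k "UNIV::'n set"] kN by auto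
  have s0: "s \<noteq> 0" unfolding s_def using T by (auto simp: card_eq_0_iff)
  have D0: "N * (N - 1) \<noteq> 0" using N2 by (simp add: N_def)
  have entry: "(barycenter k :: real^'n^'n) $ i $ j = cc k i j / s" for i j
    by (simp add: bary_S[OF kN] cc_def A_of_entry s_def)
  have A0e: "(A0 :: real^'n^'n) $ i $ j = 1" for i j
    by (simp add: A0_def A_of_entry sK_def)
  have "(barycenter k :: real^'n^'n) $ i $ j = ((1 - q) *\<^sub>R A0 + q *\<^sub>R mat 1) $ i $ j" for i j
  proof (cases "i = j")
    case True
    then show ?thesis using s0 by (simp add: entry cc_diag A0e mat_def s_def)
  next
    case False
    have X: "(N - 2 * real k)^2 - N = N * (N - 1) - 4 * real k * (N - real k)"
      by (simp add: power2_eq_square algebra_simps)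
    have "cc k i j / s = ((N - 2 * real k)^2 - N) / (N * (N - 1))"
      using cc_value[OF N2 False, of k] s0 by (simp add: s_def N_def)
    also have "\<dots> = 1 - q" unfolding X q_def using D0 by (simp add: diff_divide_distrib)
    finally show ?thesis using False by (simp add: entry A0e mat_def)
  qed
  then show ?thesis unfolding q_def N_def by (simp add: vec_eq_iff)
qed

theorem proposition1:
  fixes k :: nat
  assumes N2: "CARD('n::finite) \<ge> 2"
    and kle: "k \<le> CARD('n) div 2"
  shows "(\<forall>g \<in> (ising_set :: (real^'n^'n) set).
            mnorm (hat g) = sqrt (real (CARD('n)) * (real (CARD('n)) - 1)))
       \<and> (\<forall>g \<in> (ising_k k :: (real^'n^'n) set).
            minner (hat g) (hat A0) = (real (CARD('n)) - 2 * real k)^2 - real (CARD('n)))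
       \<and> (\<forall>g \<in> (ising_k k :: (real^'n^'n) set).
            mnorm (g - A0) = 2 * sqrt (2 * real k * (real (CARD('n)) - real k)))
       \<and> (barycenter k :: real^'n^'n) =
            (1 - 4 * real k * (real (CARD('n)) - real k) / (real (CARD('n)) * (real (CARD('n)) - 1))) *\<^sub>R A0
            + (4 * real k * (real (CARD('n)) - real k) / (real (CARD('n)) * (real (CARD('n)) - 1))) *\<^sub>R mat 1"
  using part1 part2 part3 part4[OF N2 kle] by blast

end
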